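(* Let $Q\subseteq\mathbb R[\mathbf X]$ be a quadratic module. Then $\mathcal L(Q)=\mathcal L\big(\sqrt[\mathbb R]{\operatorname{supp}Q}+Q\big)$. In particular, for every ideal $I\subseteq\sqrt[\mathbb R]{\operatorname{supp}Q}$, $\mathcal L(Q)=\mathcal L\big(\sqrt[\mathbb R]{I}+Q\big)$.
   Context: $\mathbb R[\mathbf X]=\mathbb R[X_1,\dots,X_n]$, $\Sigma^2$ sums of squares. A quadratic module is a set $Q$ with $1\in Q$, $Q+Q\subseteq Q$, $\Sigma^2Q\subseteq Q$; $\operatorname{supp}Q=Q\cap(-Q)$ is an ideal; for an ideal $I$, $I+Q$ is again a quadratic module. For a quadratic module $A$, $\mathcal L(A)=\{\sigma\in\mathbb R[\mathbf X]^*:\sigma(a)\ge0\ \forall a\in A\}$. $\sqrt[\mathbb R]{I}=\{p:\exists m\in\mathbb N, s\in\Sigma^2,\ p^{2m}+s\in I\}$. *)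

theory Defs
  imports Complex_Main "HOL-Library.Poly_Mapping"
begin

text \<open>Real polynomials in finitely many variables indexed by the finite type 'n:
  maps from monomials (exponent vectors) to real coefficients.\<close>
type_synonym 'n rpoly = "('n \<Rightarrow>\<^sub>0 nat) \<Rightarrow>\<^sub>0 real"

definition const_poly :: "real \<Rightarrow> 'n rpoly" where
  "const_poly c = Poly_Mapping.single 0 c"

definition sos :: "'n rpoly set" where
  "sos = {s. \<exists>fs. s = sum_list (map (\<lambda>f. f ^ 2) fs)}"

definition quadratic_module :: "'n rpoly set \<Rightarrow> bool" where
  "quadratic_module Q \<longleftrightarrow> 1 \<in> Q \<and> (\<forall>a\<in>Q. \<forall>b\<in>Q. a + b \<in> Q) \<and> (\<forall>s\<in>sos. \<forall>q\<in>Q. s * q \<in> Q)"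

definition supp :: "'n rpoly set \<Rightarrow> 'n rpoly set" where
  "supp Q = Q \<inter> uminus ` Q"

definition is_ideal :: "'n rpoly set \<Rightarrow> bool" where
  "is_ideal I \<longleftrightarrow> 0 \<in> I \<and> (\<forall>a\<in>I. \<forall>b\<in>I. a + b \<in> I) \<and> (\<forall>p. \<forall>a\<in>I. p * a \<in> I)"

definition real_radical :: "'n rpoly set \<Rightarrow> 'n rpoly set" where
  "real_radical I = {p. \<exists>(m::nat) s. s \<in> sos \<and> p ^ (2 * m) + s \<in> I}"

definition set_plus :: "'n rpoly set \<Rightarrow> 'n rpoly set \<Rightarrow> 'n rpoly set" where
  "set_plus I Q = {i + q | i q. i \<in> I \<and> q \<in> Q}"

definition lin_functional :: "('n rpoly \<Rightarrow> real) \<Rightarrow> bool" where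
  "lin_functional \<sigma> \<longleftrightarrow> (\<forall>p q. \<sigma> (p + q) = \<sigma> p + \<sigma> q) \<and> (\<forall>c p. \<sigma> (const_poly c * p) = c * \<sigma> p)"

definition Lfun :: "'n rpoly set \<Rightarrow> ('n rpoly \<Rightarrow> real) set" where
  "Lfun A = {\<sigma>. lin_functional \<sigma> \<and> (\<forall>a\<in>A. \<sigma> a \<ge> 0)}"

end

theory Submission
  imports Defs
begin

lemma lin_basic:
  assumes "lin_functional \<sigma>"
  shows "\<sigma> 0 = 0" "\<sigma> (- p) = - \<sigma> p" "\<sigma> (p + q) = \<sigma> p + \<sigma> q"
    "\<sigma> (const_poly c * p) = c * \<sigma> p"
proof -
  have add: "\<And>p q. \<sigma> (p + q) = \<sigma> p + \<sigma> q" using assms unfolding lin_functional_def by blast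
  show "\<sigma> 0 = 0" using add[of 0 0] by simp
  then show "\<sigma> (- p) = - \<sigma> p" using add[of p "-p"] by simp
  show "\<sigma> (p + q) = \<sigma> p + \<sigma> q" by (rule add)
  show "\<sigma> (const_poly c * p) = c * \<sigma> p" using assms unfolding lin_functional_def by blast
qed

lemma sq_sos: "(f::'n rpoly)^2 \<in> sos"
  unfolding sos_def by (rule CollectI, rule exI[of _ "[f]"], simp)

lemma sos_in_Q: assumes "quadratic_module Q" "s \<in> sos" shows "s \<in> Q"
proof -
  have "s * 1 \<in> Q" using assms unfolding quadratic_module_def by blast
  then show ?thesis by simp
qed

lemma cs_zero:
  fixes f g :: "'n rpoly"
  assumes Q: "quadratic_module Q" and s: "\<sigma> \<in> Lfun Q" and f0: "\<sigma> (f^2) = 0"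
  shows "\<sigma> (f * g) = 0"
proof -
  have lin: "lin_functional \<sigma>" and pos: "\<And>a. a \<in> Q \<Longrightarrow> \<sigma> a \<ge> 0" using s unfolding Lfun_def by auto
  define a where "a = \<sigma> (g^2)"
  define b where "b = \<sigma> (f * g)"
  have a0: "a \<ge> 0" unfolding a_def by (rule pos, rule sos_in_Q[OF Q sq_sos])
  have key: "2 * t * b + t * t * a \<ge> 0" for t
  proof -
    have eq: "(f + const_poly t * g)^2 = f^2 + const_poly t * (f*g) + const_poly t * (f*g)
        + const_poly t * (const_poly t * (g^2))"
      by (simp add: power2_eq_square algebra_simps)
    have "0 \<le> \<sigma> ((f + const_poly t * g)^2)" by (rule pos, rule sos_in_Q[OF Q sq_sos])
    also have "\<dots> = 2 * t * b + t * t * a"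
      unfolding eq by (simp only: lin_basic(3)[OF lin] lin_basic(4)[OF lin] f0)
        (simp add: a_def b_def algebra_simps)
    finally show ?thesis .
  qed
  define c where "c = a + 1"
  define t where "t = - b / c"
  have c0: "c > 0" using a0 unfolding c_def by simp
  have tc: "t * c = - b" unfolding t_def using c0 by simp
  have "c * c * (2 * t * b + t * t * a) \<ge> 0" using key[of t] c0 by simp
  moreover have "c * c * (2 * t * b + t * t * a) = 2 * (t*c) * b * c + (t*c) * (t*c) * a"
    by (simp add: algebra_simps)
  ultimately have X: "0 \<le> 2 * (t*c) * b * c + (t*c) * (t*c) * a" by simp
  have "0 \<le> 2 * (-b) * b * c + (-b) * (-b) * a" using X unfolding tc .
  then have "- 2 * b * b * (a+1) + b * b * a \<ge> 0" unfolding c_def by (simp add: algebra_simps)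
  then have "b * b * (a + 2) \<le> 0" by (simp add: algebra_simps)
  moreover have "b * b \<ge> 0" by simp
  ultimately have "b * b = 0" using a0
    by (metis add_nonneg_pos mult_le_0_iff order.antisym zero_less_numeral linorder_not_le)
  then show ?thesis unfolding b_def by simp
qed

lemma descend:
  fixes p :: "'n rpoly"
  assumes Q: "quadratic_module Q" and s: "\<sigma> \<in> Lfun Q"
  shows "(\<forall>g. \<sigma> (p^j * g) = 0) \<longrightarrow> \<sigma> p = 0"
proof (induction j rule: less_induct)
  case (less j)
  show ?case
  proof
    assume H: "\<forall>g. \<sigma> (p^j * g) = 0"
    show "\<sigma> p = 0"
    proof (cases "j \<le> 1")
      case True
      then consider "j = 0" | "j = 1" by linarith
      then show ?thesis
      proof cases
        case 1 then show ?thesis using H[rule_format, of p] by simp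
      next
        case 2 then show ?thesis using H[rule_format, of 1] by simp
      qed
    next
      case False
      define k where "k = (j + 1) div 2"
      have kj: "k < j" and jk: "j \<le> 2 * k" using False unfolding k_def by auto
      have "(p^k)^2 = p^j * p^(2*k - j)"
        using jk by (simp add: power_mult[symmetric] power_add[symmetric] mult.commute)
      then have "\<sigma> ((p^k)^2) = 0" using H by simp
      then have "\<forall>g. \<sigma> (p^k * g) = 0" using cs_zero[OF Q s] by blast
      then show ?thesis using less.IH[OF kj] by blast
    qed
  qed
qed

lemma vanish:
  fixes p :: "'n rpoly"
  assumes Q: "quadratic_module Q" and s: "\<sigma> \<in> Lfun Q"
    and ss: "t \<in> sos" and z: "\<sigma> (p^(2*m) + t) = 0"
  shows "\<sigma> p = 0"
proof -
  have lin: "lin_functional \<sigma>" and pos: "\<And>a. a \<in> Q \<Longrightarrow> \<sigma> a \<ge> 0" using s unfolding Lfun_def by auto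
  have e: "p^(2*m) = (p^m)^2" by (simp add: power_mult[symmetric] mult.commute)
  have "\<sigma> t \<ge> 0" by (rule pos, rule sos_in_Q[OF Q ss])
  moreover have "\<sigma> ((p^m)^2) \<ge> 0" by (rule pos, rule sos_in_Q[OF Q sq_sos])
  ultimately have "\<sigma> ((p^m)^2) = 0" using z e lin_basic(3)[OF lin] by simp
  then have "\<forall>g. \<sigma> (p^m * g) = 0" using cs_zero[OF Q s] by blast
  then show ?thesis using descend[OF Q s] by blast
qed

lemma zero_sos: "(0::'n rpoly) \<in> sos"
  unfolding sos_def by (rule CollectI, rule exI[of _ "[]"], simp)

lemma general:
  assumes Q: "quadratic_module Q" and zR: "0 \<in> R"
    and van: "\<And>\<sigma> r. \<sigma> \<in> Lfun Q \<Longrightarrow> r \<in> R \<Longrightarrow> \<sigma> r = 0"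
  shows "Lfun Q = Lfun (set_plus R Q)"
proof
  show "Lfun Q \<subseteq> Lfun (set_plus R Q)"
  proof
    fix \<sigma> assume s: "\<sigma> \<in> Lfun Q"
    then have lin: "lin_functional \<sigma>" and pos: "\<And>a. a \<in> Q \<Longrightarrow> \<sigma> a \<ge> 0" unfolding Lfun_def by auto
    show "\<sigma> \<in> Lfun (set_plus R Q)" unfolding Lfun_def set_plus_def
      using lin pos van[OF s] lin_basic(3)[OF lin] by auto
  qed
next
  show "Lfun (set_plus R Q) \<subseteq> Lfun Q"
  proof
    fix \<sigma> assume s: "\<sigma> \<in> Lfun (set_plus R Q)"
    have "\<forall>q\<in>Q. 0 + q \<in> set_plus R Q" using zR unfolding set_plus_def by blast
    then show "\<sigma> \<in> Lfun Q" using s unfolding Lfun_def by auto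
  qed
qed

theorem mainTheorem16:
  fixes Q :: "('n::finite) rpoly set"
  assumes "quadratic_module Q"
  shows "Lfun Q = Lfun (set_plus (real_radical (supp Q)) Q)
    \<and> (\<forall>I. is_ideal I \<and> I \<subseteq> real_radical (supp Q) \<longrightarrow> Lfun Q = Lfun (set_plus (real_radical I) Q))"
proof -
  note Q = assms
  have z: "(0::'n rpoly) \<in> Q" using sos_in_Q[OF Q zero_sos] .
  have vsupp: "\<sigma> r = 0" if s: "\<sigma> \<in> Lfun Q" and r: "r \<in> real_radical (supp Q)" for \<sigma> r
  proof -
    have lin: "lin_functional \<sigma>" and pos: "\<And>a. a \<in> Q \<Longrightarrow> \<sigma> a \<ge> 0" using s unfolding Lfun_def by auto
    obtain m t where t: "t \<in> sos" and mt: "r^(2*m) + t \<in> supp Q"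
      using r unfolding real_radical_def by blast
    define x where "x = r^(2*m) + t"
    have xQ: "x \<in> Q" and "x \<in> uminus ` Q" using mt unfolding supp_def x_def by auto
    then obtain y where y: "y \<in> Q" "x = - y" by blast
    have "- x \<in> Q" using y by simp
    then have "\<sigma> (- x) \<ge> 0" by (rule pos)
    then have "\<sigma> x \<le> 0" using lin_basic(2)[OF lin, of x] by simp
    moreover have "\<sigma> x \<ge> 0" by (rule pos[OF xQ])
    ultimately have "\<sigma> (r^(2*m) + t) = 0" unfolding x_def by simp
    then show ?thesis using vanish[OF Q s t] by blast
  qed
  have "(0::'n rpoly) \<in> uminus ` Q" using z by (rule rev_image_eqI) simp
  then have "(0::'n rpoly)^(2*1) + 0 \<in> supp Q" unfolding supp_def using z by simp
  then have z1: "0 \<in> real_radical (supp Q)" unfolding real_radical_def using zero_sos by blast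
  show ?thesis
  proof
    show "Lfun Q = Lfun (set_plus (real_radical (supp Q)) Q)"
      using general[OF Q z1] vsupp by blast
    show "\<forall>I. is_ideal I \<and> I \<subseteq> real_radical (supp Q) \<longrightarrow> Lfun Q = Lfun (set_plus (real_radical I) Q)"
    proof (intro allI impI)
      fix I assume I: "is_ideal I \<and> I \<subseteq> real_radical (supp Q)"
      have "(0::'n rpoly)^(2*1) + 0 \<in> I" using I unfolding is_ideal_def by simp
      then have zI: "0 \<in> real_radical I" unfolding real_radical_def using zero_sos by blast
      show "Lfun Q = Lfun (set_plus (real_radical I) Q)"
      proof (rule general[OF Q zI])
        fix \<sigma> r assume s: "\<sigma> \<in> Lfun Q" and r: "r \<in> real_radical I"
        obtain m t where t: "t \<in> sos" and mt: "r^(2*m) + t \<in> I"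
          using r unfolding real_radical_def by blast
        have "\<sigma> (r^(2*m) + t) = 0" using vsupp[OF s] mt I by blast
        then show "\<sigma> r = 0" using vanish[OF Q s t] by blast
      qed
    qed
  qed
qed

end
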